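(* Fix finite-dimensional $\mathcal H_2,\mathcal H_1$, an integer $M\ge1$ and an integer $1\le r\le\dim\mathcal H_1$. Then either for every density operator $\rho$ on $\mathcal H_1$ of rank $r$ there exists an extremal quantum $1$-tester with $M$ outcomes and normalization $I_2\otimes\rho$, or for no density operator $\rho$ of rank $r$ does such an extremal tester exist.
   Context: A quantum $1$-tester with $M$ outcomes is a family of positive operators $\{T_i\}_{i=1}^M$ on $\mathcal H_2\otimes\mathcal H_1$ with $\sum_iT_i=I_2\otimes\rho$ for a density operator $\rho$ on $\mathcal H_1$ (its normalization); extremal means an extreme point of the convex set of all such testers with $M$ outcomes. *)

theory Defs
  imports "HOL-Analysis.Analysis"
begin

text \<open>Operators on a finite-dimensional Hilbert space with basis indexed by a finite type 'n
  are complex matrices of type complex^'n^'n.  The tensor product H2 (x) H1 is indexed by 'n2 \<times> 'n1.\<close>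

definition positive_op :: "complex^'n^'n \<Rightarrow> bool" where
  "positive_op A \<longleftrightarrow> (\<forall>v :: complex^'n.
      Im (\<Sum>i\<in>UNIV. \<Sum>j\<in>UNIV. cnj (v$i) * (A$i$j) * v$j) = 0 \<and>
      Re (\<Sum>i\<in>UNIV. \<Sum>j\<in>UNIV. cnj (v$i) * (A$i$j) * v$j) \<ge> 0)"

definition mtrace :: "complex^'n^'n \<Rightarrow> complex" where
  "mtrace A = (\<Sum>i\<in>UNIV. A$i$i)"

definition density_op :: "complex^'n^'n \<Rightarrow> bool" where
  "density_op \<rho> \<longleftrightarrow> positive_op \<rho> \<and> mtrace \<rho> = 1"

definition id_tensor :: "complex^'n1::finite^'n1 \<Rightarrow> complex^('n2::finite \<times> 'n1)^('n2 \<times> 'n1)" where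
  "id_tensor \<rho> = (\<chi> p q. (if fst p = fst q then 1 else 0) * \<rho> $ snd p $ snd q)"

text \<open>Quantum 1-testers with outcomes indexed by the finite type 'm (M = CARD('m)).\<close>
definition testers :: "((complex^('n2::finite \<times> 'n1::finite)^('n2 \<times> 'n1))^'m::finite) set" where
  "testers = {T. (\<forall>i. positive_op (T$i)) \<and>
                 (\<exists>\<rho> :: complex^'n1^'n1. density_op \<rho> \<and> (\<Sum>i\<in>UNIV. T$i) = id_tensor \<rho>)}"

definition extremal_tester :: "((complex^('n2::finite \<times> 'n1::finite)^('n2 \<times> 'n1))^'m::finite) \<Rightarrow> bool" where
  "extremal_tester T \<longleftrightarrow> T extreme_point_of testers"

end

theory Submission
  imports Defs
begin

definition sesq :: "complex^'n \<Rightarrow> complex^'n \<Rightarrow> complex" where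
  "sesq x y = (\<Sum>i\<in>UNIV. cnj (x$i) * y$i)"
definition adj :: "complex^'n^'m \<Rightarrow> complex^'m^'n" where
  "adj A = (\<chi> i j. cnj (A$j$i))"
definition outer :: "complex^'n \<Rightarrow> complex^'n^'n" where
  "outer v = (\<chi> i j. v$i * cnj (v$j))"
definition cnn :: "complex \<Rightarrow> bool" where
  "cnn z \<longleftrightarrow> Im z = 0 \<and> 0 \<le> Re z"

lemma pos_iff: "positive_op A \<longleftrightarrow> (\<forall>v. cnn (sesq v (A *v v)))"
proof -
  have "(\<Sum>i\<in>UNIV. \<Sum>j\<in>UNIV. cnj (v$i) * (A$i$j) * v$j) = sesq v (A *v v)" for v
    by (simp add: sesq_def matrix_vector_mult_def sum_distrib_left mult.assoc)
  then show ?thesis unfolding positive_op_def cnn_def by simp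
qed

lemma sesq_add_left: "sesq (x + y) z = sesq x z + sesq y z"
  by (simp add: sesq_def sum.distrib distrib_right)
lemma sesq_add_right: "sesq z (x + y) = sesq z x + sesq z y"
  by (simp add: sesq_def sum.distrib distrib_left)
lemma sesq_diff_right: "sesq z (x - y) = sesq z x - sesq z y"
  by (simp add: sesq_def sum_subtractf right_diff_distrib)
lemma sesq_scale_left: "sesq (c *s x) z = cnj c * sesq x z"
  by (simp add: sesq_def sum_distrib_left mult.assoc)
lemma sesq_scale_right: "sesq z (c *s x) = c * sesq z x"
  by (simp add: sesq_def sum_distrib_left mult.left_commute)
lemma sesq_cnj: "sesq y x = cnj (sesq x y)"
  by (simp add: sesq_def mult.commute)
lemma sesq_axis_left: "sesq (axis i c) y = cnj c * y$i"
proof -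
  have "sesq (axis i c) y = (\<Sum>j\<in>UNIV. if j = i then cnj c * y$i else 0)"
    unfolding sesq_def by (rule sum.cong) (auto simp: axis_def)
  then show ?thesis by simp
qed
lemma sesq_axis_right: "sesq y (axis i c) = cnj (y$i) * c"
  by (simp add: sesq_def axis_def if_distrib cong: if_cong)
lemma sesq_adj: "sesq x (B *v y) = sesq (adj B *v x) y"
proof -
  have l: "sesq x (B *v y) = (\<Sum>i\<in>UNIV. \<Sum>j\<in>UNIV. cnj (x$i) * B$i$j * y$j)"
    by (simp add: sesq_def matrix_vector_mult_def sum_distrib_left mult.assoc)
  have r: "sesq (adj B *v x) y = (\<Sum>j\<in>UNIV. \<Sum>i\<in>UNIV. cnj (x$i) * B$i$j * y$j)"
    unfolding sesq_def adj_def matrix_vector_mult_def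
    by (intro sum.cong refl) (simp add: sum_distrib_right sum_distrib_left mult.commute mult.left_commute)
  show ?thesis unfolding l r by (rule sum.swap)
qed

lemma adj_adj[simp]: "adj (adj A) = A"
  by (simp add: adj_def vec_eq_iff)
lemma adj_mult: "adj (A ** B) = adj B ** adj A"
  by (simp add: adj_def matrix_matrix_mult_def vec_eq_iff mult.commute)
lemma adj_one[simp]: "adj (mat 1) = mat 1"
  by (simp add: adj_def mat_def vec_eq_iff)

lemma sesq_self: "sesq x x = of_real (\<Sum>i\<in>UNIV. (cmod (x$i))\<^sup>2)"
  unfolding sesq_def of_real_sum
  by (rule sum.cong) (auto simp: complex_norm_square mult.commute simp del: of_real_power)

lemma sesq_self_eq0: "sesq x x = 0 \<longleftrightarrow> x = 0"
proof
  assume "sesq x x = 0"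
  then have "(\<Sum>i\<in>UNIV. (cmod (x$i))\<^sup>2) = 0" unfolding sesq_self of_real_eq_0_iff .
  then have "\<forall>i\<in>UNIV. (cmod (x$i))\<^sup>2 = 0" by (subst (asm) sum_nonneg_eq_0_iff) auto
  then show "x = 0" by (simp add: vec_eq_iff)
qed (simp add: sesq_def)

lemma mv_add: "A *v (x + y) = A *v x + A *v y"
  by (simp add: vec_eq_iff matrix_vector_mult_def sum.distrib distrib_left)
lemma mv_scale: "A *v (c *s x) = c *s (A *v x)" for A :: "complex^'n^'m"
    unfolding vec_eq_iff matrix_vector_mult_def by (auto simp: sum_distrib_left mult.left_commute intro!: sum.cong)
lemma mv_axis: "(A *v axis j t)$i = A$i$j * t"
proof -
  have "(A *v axis j t)$i = (\<Sum>k\<in>UNIV. if k = j then A$i$j * t else 0)"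
    unfolding matrix_vector_mult_def vec_lambda_beta by (rule sum.cong) (auto simp: axis_def)
  then show ?thesis by simp
qed

lemma q_add: "sesq (x + y) (A *v (x + y)) = sesq x (A *v x) + sesq y (A *v y) + sesq x (A *v y) + sesq y (A *v x)"
  by (simp add: mv_add sesq_add_left sesq_add_right)

lemma q_axis: "sesq (axis i t) (A *v axis i t) = cnj t * A$i$i * t"
  by (simp add: sesq_axis_left mv_axis)

lemma herm_aux:
  assumes "positive_op A"
  shows "Im (A$i$j * t + cnj t * A$j$i) = 0"
proof -
  have P: "\<And>v. cnn (sesq v (A *v v))" using assms pos_iff by blast
  have "Im (sesq (axis i 1 + axis j t) (A *v (axis i 1 + axis j t))) = 0" using P cnn_def by blast
  moreover have "Im (sesq (axis i 1) (A *v (axis i 1))) = 0" using P cnn_def by blast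
  moreover have "Im (sesq (axis j t) (A *v (axis j t))) = 0" using P cnn_def by blast
  ultimately show ?thesis unfolding q_add by (simp add: sesq_axis_left mv_axis)
qed

lemma herm:
  assumes "positive_op A"
  shows "A$j$i = cnj (A$i$j)"
proof -
  have 1: "Im (A$i$j * 1 + cnj 1 * A$j$i) = 0" by (rule herm_aux[OF assms])
  have 2: "Im (A$i$j * \<i> + cnj \<i> * A$j$i) = 0" by (rule herm_aux[OF assms])
  show ?thesis using 1 2 by (simp add: complex_eq_iff)
qed

lemma adj_herm:
  assumes "positive_op A"
  shows "adj A = A"
proof -
  have h: "\<And>i j. cnj (A$j$i) = A$i$j" using herm[OF assms] by (metis complex_cnj_cnj)
  show ?thesis by (simp add: vec_eq_iff adj_def h)
qed

lemma sesq_herm: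
  assumes "positive_op A"
  shows "sesq y (A *v x) = cnj (sesq x (A *v y))"
proof -
  have "sesq y (A *v x) = sesq (adj A *v y) x" by (rule sesq_adj)
  also have "\<dots> = cnj (sesq x (adj A *v y))" by (rule sesq_cnj)
  finally show ?thesis using adj_herm[OF assms] by simp
qed

lemma diag_real:
  assumes "positive_op A"
  shows "A$i$i = of_real (Re (A$i$i))" "0 \<le> Re (A$i$i)"
proof -
  have "cnn (sesq (axis i 1) (A *v axis i 1))" using assms pos_iff by blast
  then show "A$i$i = of_real (Re (A$i$i))" "0 \<le> Re (A$i$i)"
    by (auto simp: q_axis cnn_def complex_eq_iff)
qed

lemma diag_zero:
  assumes "positive_op A" "A$i$i = 0"
  shows "A$i$j = 0"
proof (rule ccontr)
  assume ne: "A$i$j \<noteq> 0"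
  define c where "c = A$i$j"
  define s where "s = (\<bar>Re (A$j$j)\<bar> + 1) / (2 * (cmod c)\<^sup>2)"
  define t where "t = - (of_real s * c)"
  have cpos: "0 < (cmod c)\<^sup>2" using ne c_def by simp
  have P: "\<And>v. cnn (sesq v (A *v v))" using assms pos_iff by blast
  have "0 \<le> Re (sesq (axis i t + axis j 1) (A *v (axis i t + axis j 1)))" using P cnn_def by blast
  also have "sesq (axis i t + axis j 1) (A *v (axis i t + axis j 1)) =
     A$j$j + cnj t * c + t * cnj c"
    unfolding q_add using assms(2) herm[OF assms(1), of j i]
    by (simp add: sesq_axis_left mv_axis c_def)
  also have "cnj t * c = - of_real (s * (cmod c)\<^sup>2)"
    unfolding t_def of_real_mult complex_norm_square by (simp add: mult_ac)
  also have "t * cnj c = - of_real (s * (cmod c)\<^sup>2)"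
    unfolding t_def of_real_mult complex_norm_square by (simp add: mult_ac)
  also have "Re (A$j$j + - of_real (s * (cmod c)\<^sup>2) + - of_real (s * (cmod c)\<^sup>2)) = Re (A$j$j) - 2 * s * (cmod c)\<^sup>2"
    by simp
  also have "2 * s * (cmod c)\<^sup>2 = \<bar>Re (A$j$j)\<bar> + 1"
    using cpos by (simp add: s_def)
  finally show False by simp
qed
lemma outer_mv: "outer v *v x = sesq v x *s v"
  by (simp add: vec_eq_iff outer_def matrix_vector_mult_def sesq_def sum_distrib_left mult_ac)

lemma mv_diff: "(A - B) *v x = A *v x - B *v x" for A :: "complex^'n^'m"
  by (simp add: vec_eq_iff matrix_vector_mult_def sum_subtractf algebra_simps)

lemma mv_matadd: "(A + B) *v x = A *v x + B *v x" for A :: "complex^'n^'m"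
  by (simp add: vec_eq_iff matrix_vector_mult_def sum.distrib algebra_simps)

lemma q_outer: "sesq x (outer v *v x) = of_real ((cmod (sesq v x))\<^sup>2)"
  by (simp add: outer_mv sesq_scale_right sesq_cnj[of x v] complex_norm_square del: of_real_power)

lemma cnn_of_real: "0 \<le> r \<Longrightarrow> cnn (of_real r)" by (simp add: cnn_def)
lemma cnn_add: "cnn a \<Longrightarrow> cnn b \<Longrightarrow> cnn (a + b)" by (simp add: cnn_def)

lemma pos_outer: "positive_op (outer v)"
  unfolding pos_iff q_outer by (simp add: cnn_def)

lemma pos_add: "positive_op A \<Longrightarrow> positive_op B \<Longrightarrow> positive_op (A + B)"
  unfolding pos_iff by (simp add: mv_matadd sesq_add_right cnn_add)

lemma pos_zero: "positive_op 0"
  unfolding pos_iff by (simp add: sesq_def cnn_def)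

lemma pos_sum: "finite F \<Longrightarrow> (\<And>x. x \<in> F \<Longrightarrow> positive_op (f x)) \<Longrightarrow> positive_op (sum f F)"
  by (induction F rule: finite_induct) (auto simp: pos_zero pos_add)

lemma pos_sum_outer: "finite V \<Longrightarrow> positive_op (\<Sum>v\<in>V. outer v)"
  by (rule pos_sum) (auto simp: pos_outer)

lemma sum_entry: "(sum f F)$i$j = (\<Sum>x\<in>F. f x $i$j)" for f :: "_ \<Rightarrow> complex^'n^'m"
  by (simp add: sum_component)

lemma rows_zero: "rows (0::complex^'n^'m) = {0}"
  by (auto simp: rows_def row_def vec_eq_iff)

lemma rank_zero: "rank (0::complex^'n^'m) = 0"
  unfolding row_rank_def_gen rows_zero by (simp add: vec.dim_insert)

lemma subspace_coord0: "vec.subspace {x::complex^'n. x$i = 0}"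
  by (simp add: vec.subspace_def)

lemma span_coord0: "(\<And>x. x \<in> S \<Longrightarrow> x$i = 0) \<Longrightarrow> y \<in> vec.span S \<Longrightarrow> (y::complex^'n)$i = 0"
  using vec.span_minimal[OF _ subspace_coord0, of S i] by blast

lemma decomp_step:
  fixes \<rho> :: "complex^'n^'n"
  assumes pos: "positive_op \<rho>" and ne: "\<rho>$i$i \<noteq> 0"
  defines "a \<equiv> Re (\<rho>$i$i)"
  defines "v \<equiv> (\<chi> j. \<rho>$j$i / of_real (sqrt a))"
  shows "positive_op (\<rho> - outer v)" "\<And>j. (\<rho> - outer v)$j$i = 0"
    "rank \<rho> = Suc (rank (\<rho> - outer v))" "v$i \<noteq> 0"
proof -
  have aeq: "\<rho>$i$i = of_real a" using diag_real(1)[OF pos] a_def by simp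
  have "a \<noteq> 0" using ne aeq by auto
  then have apos: "0 < a" using diag_real(2)[OF pos, of i] unfolding a_def by linarith
  have sa: "sqrt a * sqrt a = a" using apos by simp
  have sapos: "0 < sqrt a" using apos by simp
  have H: "\<And>j k. \<rho>$j$k = cnj (\<rho>$k$j)" using herm[OF pos] by blast
  have outer_e: "(outer v)$j$k = \<rho>$j$i * \<rho>$i$k / of_real a" for j k
  proof -
    have "(outer v)$j$k = \<rho>$j$i * cnj (\<rho>$k$i) / (of_real (sqrt a) * of_real (sqrt a))"
      by (simp add: outer_def v_def)
    also have "of_real (sqrt a) * of_real (sqrt a) = (of_real a :: complex)"
      by (metis of_real_mult sa)
    finally show ?thesis using H[of i k] by simp
  qed
  show col: "(\<rho> - outer v)$j$i = 0" for j
    using apos by (simp add: outer_e aeq)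
  show "v$i \<noteq> 0" using ne sapos by (simp add: v_def)
  show "positive_op (\<rho> - outer v)"
    unfolding pos_iff
  proof
    fix x
    define c where "c = (\<rho> *v x)$i"
    define t where "t = - c / of_real a"
    have sv: "sesq v x = c / of_real (sqrt a)"
      by (simp add: sesq_def v_def c_def matrix_vector_mult_def sum_divide_distrib H[of _ i])
    have sv': "sesq x v = cnj c / of_real (sqrt a)"
      using sv sesq_cnj[of x v] by simp
    have "sesq x ((\<rho> - outer v) *v x) = sesq x (\<rho> *v x) - c * cnj c / of_real a"
    proof -
      have "sesq x ((\<rho> - outer v) *v x) = sesq x (\<rho> *v x) - sesq v x * sesq x v"
        by (simp add: mv_diff outer_mv sesq_diff_right sesq_scale_right)
      also have "sesq v x * sesq x v = c * cnj c / (of_real (sqrt a) * of_real (sqrt a))"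
        by (simp add: sv sv')
      also have "of_real (sqrt a) * of_real (sqrt a) = (of_real a :: complex)"
        by (metis of_real_mult sa)
      finally show ?thesis .
    qed
    also have "\<dots> = sesq (x + axis i t) (\<rho> *v (x + axis i t))"
    proof -
      have e1: "sesq (axis i t) (\<rho> *v x) = cnj t * c" by (simp add: sesq_axis_left c_def)
      have e2: "sesq x (\<rho> *v axis i t) = t * cnj c"
        using sesq_herm[OF pos, of x "axis i t"] e1 by simp
      have "sesq (x + axis i t) (\<rho> *v (x + axis i t)) =
          sesq x (\<rho> *v x) + cnj t * of_real a * t + t * cnj c + cnj t * c"
        unfolding q_add q_axis e1 e2 aeq by simp
      also have "\<dots> = sesq x (\<rho> *v x) - c * cnj c / of_real a"
        using apos by (simp add: t_def field_simps)
      finally show ?thesis by simp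
    qed
    finally show "cnn (sesq x ((\<rho> - outer v) *v x))"
      using pos pos_iff by metis
  qed
  define R where "R = row i \<rho>"
  have rowk: "row k \<rho> = row k (\<rho> - outer v) + (\<rho>$k$i / of_real a) *s R" for k
    by (simp add: vec_eq_iff row_def R_def outer_e)
  have "vec.span (rows \<rho>) = vec.span (insert R (rows (\<rho> - outer v)))"
    unfolding vec.span_eq
  proof
    show "rows \<rho> \<subseteq> vec.span (insert R (rows (\<rho> - outer v)))"
    proof
      fix y assume "y \<in> rows \<rho>"
      then obtain k where y: "y = row k \<rho>" by (auto simp: rows_def)
      show "y \<in> vec.span (insert R (rows (\<rho> - outer v)))"
        unfolding y rowk
        by (intro vec.span_add vec.span_scale vec.span_base) (auto simp: rows_def)
    qed
    show "insert R (rows (\<rho> - outer v)) \<subseteq> vec.span (rows \<rho>)"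
    proof
      fix y assume "y \<in> insert R (rows (\<rho> - outer v))"
      then consider "y = R" | k where "y = row k (\<rho> - outer v)" by (auto simp: rows_def)
      then show "y \<in> vec.span (rows \<rho>)"
      proof cases
        case 1 then show ?thesis by (intro vec.span_base) (auto simp: rows_def R_def)
      next
        case 2
        have "y = row k \<rho> - (\<rho>$k$i / of_real a) *s R" using rowk[of k] 2 by simp
        then show ?thesis
          by (simp, intro vec.span_diff vec.span_scale vec.span_base) (auto simp: rows_def R_def)
      qed
    qed
  qed
  moreover have "R \<notin> vec.span (rows (\<rho> - outer v))"
  proof
    assume "R \<in> vec.span (rows (\<rho> - outer v))"
    moreover have "\<And>x. x \<in> rows (\<rho> - outer v) \<Longrightarrow> x$i = 0"
      using col by (auto simp: rows_def row_def)
    ultimately have "R$i = 0" using span_coord0 by blast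
    then show False using ne by (simp add: R_def row_def)
  qed
  ultimately show "rank \<rho> = Suc (rank (\<rho> - outer v))"
    unfolding row_rank_def_gen
    by (metis vec.dim_span vec.dim_insert Suc_eq_plus1)
qed

lemma diag_outer_sum_zero:
  assumes "finite V" "(\<Sum>w\<in>V. outer w)$i$i = 0" "w \<in> V"
  shows "w$i = 0"
proof -
  have "(\<Sum>w\<in>V. outer w)$i$i = of_real (\<Sum>w\<in>V. (cmod (w$i))\<^sup>2)"
    unfolding sum_entry of_real_sum
    by (rule sum.cong) (auto simp: outer_def complex_norm_square simp del: of_real_power)
  then have "(\<Sum>w\<in>V. (cmod (w$i))\<^sup>2) = 0" using assms(2) by (metis of_real_eq_0_iff)
  then have "\<forall>w\<in>V. (cmod (w$i))\<^sup>2 = 0" using assms(1) by (subst (asm) sum_nonneg_eq_0_iff) auto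
  then show ?thesis using assms(3) by simp
qed

lemma decomp:
  fixes \<rho> :: "complex^'n^'n"
  assumes "positive_op \<rho>"
  shows "\<exists>V. finite V \<and> vec.independent V \<and> card V = rank \<rho> \<and> \<rho> = (\<Sum>v\<in>V. outer v)"
  using assms
proof (induction "rank \<rho>" arbitrary: \<rho> rule: less_induct)
  case less
  show ?case
  proof (cases "\<rho> = 0")
    case True
    then show ?thesis by (intro exI[of _ "{}"]) (simp add: rank_zero vec.dependent_def)
  next
    case False
    then obtain i where ne: "\<rho>$i$i \<noteq> 0"
      using diag_zero[OF less.prems] by (metis vec_eq_iff zero_index)
    define a where "a = Re (\<rho>$i$i)"
    define v where "v = (\<chi> j. \<rho>$j$i / of_real (sqrt a))"
    note st = decomp_step[OF less.prems ne, folded a_def, folded v_def]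
    obtain V where V: "finite V" "vec.independent V" "card V = rank (\<rho> - outer v)"
      "\<rho> - outer v = (\<Sum>v\<in>V. outer v)"
      using less.hyps[of "\<rho> - outer v"] st(1,3) by auto
    have z: "\<And>w. w \<in> V \<Longrightarrow> w$i = 0"
      using diag_outer_sum_zero[OF V(1)] V(4) st(2) by metis
    have nsp: "v \<notin> vec.span V"
      using span_coord0[of V i v] z st(4) by blast
    then have nV: "v \<notin> V" using vec.span_base by blast
    show ?thesis
    proof (intro exI[of _ "insert v V"] conjI)
      show "finite (insert v V)" using V(1) by simp
      show "vec.independent (insert v V)" using V(2) nsp by (simp add: vec.independent_insert)
      show "card (insert v V) = rank \<rho>" using V(1,3) nV st(3) by simp
      show "\<rho> = (\<Sum>v\<in>insert v V. outer v)"
        using V(1,4) nV by (simp add: algebra_simps)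
    qed
  qed
qed

lemma mm_add_r: "(A + B) ** C = A ** C + B ** C" for A :: "complex^'n^'m"
  by (simp add: matrix_matrix_mult_def vec_eq_iff sum.distrib distrib_right)

lemma congr_sum:
  fixes B :: "complex^'n^'m" and C :: "complex^'k^'n"
  assumes "finite F"
  shows "B ** (sum f F) ** C = (\<Sum>x\<in>F. B ** f x ** C)"
  using assms by (induction F rule: finite_induct) (simp_all add: matrix_add_ldistrib mm_add_r)

lemma congr_outer: "B ** outer v ** adj B = outer (B *v v)"
  unfolding matrix_eq
proof
  fix x
  have "(B ** outer v ** adj B) *v x = B *v (outer v *v (adj B *v x))"
    by (simp add: matrix_vector_mul_assoc matrix_mul_assoc)
  also have "\<dots> = sesq v (adj B *v x) *s (B *v v)" by (simp add: outer_mv mv_scale)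
  also have "sesq v (adj B *v x) = sesq (B *v v) x"
    using sesq_adj[of x B v] sesq_cnj by metis
  finally show "(B ** outer v ** adj B) *v x = outer (B *v v) *v x" by (simp add: outer_mv)
qed

lemma congruence:
  fixes \<rho> \<sigma> :: "complex^'n^'n"
  assumes "positive_op \<rho>" "positive_op \<sigma>" "rank \<rho> = rank \<sigma>"
  shows "\<exists>S S'. S' ** S = mat 1 \<and> S ** S' = mat 1 \<and> S ** \<sigma> ** adj S = \<rho>"
proof -
  obtain V where V: "finite V" "vec.independent V" "card V = rank \<rho>" "\<rho> = (\<Sum>v\<in>V. outer v)"
    using decomp[OF assms(1)] by blast
  obtain W where W: "finite W" "vec.independent W" "card W = rank \<sigma>" "\<sigma> = (\<Sum>v\<in>W. outer v)"
    using decomp[OF assms(2)] by blast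
  obtain h where h: "bij_betw h W V" using bij_betw_iff_card[OF W(1) V(1)] V(3) W(3) assms(3) by auto
  obtain g where g: "Vector_Spaces.linear (*s) (*s) g" "inj g" "\<forall>x\<in>W. g x = h x"
    using vec.linear_independent_extend_inj[OF W(2), of h] h V(2)
    by (metis bij_betw_def bij_betw_imp_surj_on)
  define S where "S = matrix g"
  have Sg: "\<And>x. S *v x = g x" using matrix_works[OF g(1)] S_def by simp
  have "inj ((*v) S)" using g(2) Sg by (metis ext)
  then obtain S' where S': "S' ** S = mat 1" using matrix_left_invertible_injective by blast
  then have S'': "S ** S' = mat 1" using matrix_left_right_inverse by blast
  have "S ** \<sigma> ** adj S = (\<Sum>w\<in>W. outer (S *v w))"
    unfolding W(4) congr_sum[OF W(1)] congr_outer ..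
  also have "\<dots> = (\<Sum>w\<in>W. outer (h w))" using Sg g(3) by simp
  also have "\<dots> = \<rho>" unfolding V(4) by (rule sum.reindex_bij_betw[OF h])
  finally show ?thesis using S' S'' by blast
qed

lemma sum_pairs: "(\<Sum>r\<in>(UNIV::('a::finite \<times> 'b::finite) set). f r) = (\<Sum>a\<in>UNIV. \<Sum>b\<in>UNIV. f (a, b))"
  by (simp add: UNIV_Times_UNIV[symmetric] sum.cartesian_product del: UNIV_Times_UNIV)

lemma id_tensor_mult:
  "(id_tensor A :: complex^('n2::finite \<times> 'n1::finite)^('n2 \<times> 'n1)) ** id_tensor B = id_tensor (A ** B)"
proof -
  have "(\<Sum>r\<in>UNIV. (if fst p = fst r then 1 else 0) * A $ snd p $ snd r *
          ((if fst r = fst q then 1 else 0) * B $ snd r $ snd q)) =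
        (if fst p = fst q then 1 else 0) * (\<Sum>k\<in>UNIV. A $ snd p $ k * B $ k $ snd q)"
    for p q :: "'n2 \<times> 'n1"
  proof -
    have "(\<Sum>r\<in>UNIV. (if fst p = fst r then 1 else 0) * A $ snd p $ snd r *
          ((if fst r = fst q then 1 else 0) * B $ snd r $ snd q)) =
       (\<Sum>a\<in>UNIV. \<Sum>b\<in>UNIV. (if a = fst p then (if fst p = fst q then 1 else 0) * (A $ snd p $ b * B $ b $ snd q) else 0))"
      unfolding sum_pairs by (intro sum.cong) auto
    also have "\<dots> = (\<Sum>a\<in>UNIV. if a = fst p then (\<Sum>b\<in>UNIV. (if fst p = fst q then 1 else 0) * (A $ snd p $ b * B $ b $ snd q)) else 0)"
      by (intro sum.cong) auto
    also have "\<dots> = (if fst p = fst q then 1 else 0) * (\<Sum>k\<in>UNIV. A $ snd p $ k * B $ k $ snd q)"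
      by (simp add: sum_distrib_left)
    finally show ?thesis .
  qed
  then show ?thesis
    by (simp add: vec_eq_iff id_tensor_def matrix_matrix_mult_def)
qed

lemma adj_id_tensor: "adj (id_tensor A :: complex^('n2::finite \<times> 'n1::finite)^('n2 \<times> 'n1)) = id_tensor (adj A)"
  by (simp add: vec_eq_iff id_tensor_def adj_def)

lemma id_tensor_one: "(id_tensor (mat 1) :: complex^('n2::finite \<times> 'n1::finite)^('n2 \<times> 'n1)) = mat 1"
  by (auto simp: vec_eq_iff id_tensor_def mat_def prod_eq_iff)

lemma id_tensor_inj:
  assumes "(id_tensor A :: complex^('n2::finite \<times> 'n1::finite)^('n2 \<times> 'n1)) = id_tensor B"
  shows "A = B"
proof -
  have "\<And>p q. (id_tensor A :: complex^('n2 \<times> 'n1)^('n2 \<times> 'n1))$p$q = id_tensor B $p$q" using assms by simp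
  from this[of "(undefined, i)" "(undefined, j)" for i j] show ?thesis
    by (simp add: vec_eq_iff id_tensor_def)
qed

lemma cscale: "r *\<^sub>R (z::complex) = of_real r * z" by (rule scaleR_conv_of_real)
lemma scaleR_vec: "(c *\<^sub>R x)$i = of_real c * (x$i :: complex)"
  unfolding vector_scaleR_component by (rule scaleR_conv_of_real)
lemma scaleR_mat: "(c *\<^sub>R A)$i$j = of_real c * (A$i$j :: complex)"
  unfolding vector_scaleR_component by (rule scaleR_conv_of_real)

lemma id_tensor_lin: "(id_tensor (c *\<^sub>R A + d *\<^sub>R B) :: complex^('n2::finite \<times> 'n1::finite)^('n2 \<times> 'n1)) =
   c *\<^sub>R id_tensor A + d *\<^sub>R id_tensor B"
  by (simp add: vec_eq_iff id_tensor_def scaleR_mat cscale algebra_simps)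

lemma id_tensor_scale: "(id_tensor (c *\<^sub>R A) :: complex^('n2::finite \<times> 'n1::finite)^('n2 \<times> 'n1)) =
   c *\<^sub>R id_tensor A"
  by (simp add: vec_eq_iff id_tensor_def scaleR_mat cscale algebra_simps)

lemma mm_scale_l: "(c *\<^sub>R A) ** B = c *\<^sub>R (A ** B)" for A :: "complex^'n^'m"
  by (simp add: vec_eq_iff matrix_matrix_mult_def scaleR_mat cscale scaleR_vec sum_distrib_left mult_ac)
lemma mm_scale_r: "A ** (c *\<^sub>R B) = c *\<^sub>R (A ** B)" for A :: "complex^'n^'m"
  by (simp add: vec_eq_iff matrix_matrix_mult_def scaleR_mat cscale scaleR_vec sum_distrib_left mult_ac)

lemma pos_congr: "positive_op A \<Longrightarrow> positive_op (B ** A ** adj B)"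
proof -
  assume "positive_op A"
  then have P: "\<And>v. cnn (sesq v (A *v v))" using pos_iff by blast
  have "sesq x ((B ** A ** adj B) *v x) = sesq (adj B *v x) (A *v (adj B *v x))" for x
    by (simp add: matrix_vector_mul_assoc[symmetric] sesq_adj)
  then show ?thesis using P pos_iff by metis
qed

lemma mv_scaleR: "(c *\<^sub>R A) *v x = of_real c *s (A *v x)" for A :: "complex^'n^'m"
  by (simp add: vec_eq_iff matrix_vector_mult_def scaleR_mat cscale scaleR_vec sum_distrib_left mult_ac)

lemma pos_scaleR: "0 \<le> c \<Longrightarrow> positive_op A \<Longrightarrow> positive_op (c *\<^sub>R A)"
  unfolding pos_iff by (simp add: mv_scaleR sesq_scale_right cnn_def)

lemma mtrace_add: "mtrace (A + B) = mtrace A + mtrace B"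
  by (simp add: mtrace_def sum.distrib)
lemma mtrace_scale: "mtrace (c *\<^sub>R A) = of_real c * mtrace A"
  by (simp add: mtrace_def scaleR_mat cscale sum_distrib_left)
lemma mtrace_sum: "finite F \<Longrightarrow> mtrace (sum f F) = (\<Sum>x\<in>F. mtrace (f x))"
  by (simp add: mtrace_def sum_entry sum.swap[of _ F])
lemma mtrace_outer: "mtrace (outer w) = sesq w w"
  by (simp add: mtrace_def outer_def sesq_def mult.commute)

lemma trace_pos:
  fixes \<rho> :: "complex^'n^'n" and B :: "complex^'n^'n"
  assumes "positive_op \<rho>" "mtrace \<rho> = 1" "S ** B = mat 1"
  shows "\<exists>a>0. mtrace (B ** \<rho> ** adj B) = of_real a"
proof -
  obtain V where V: "finite V" "vec.independent V" "\<rho> = (\<Sum>v\<in>V. outer v)"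
    using decomp[OF assms(1)] by blast
  define f where "f w = (\<Sum>k\<in>UNIV. (cmod (w$k))\<^sup>2)" for w :: "complex^'n"
  have "mtrace (B ** \<rho> ** adj B) = (\<Sum>v\<in>V. of_real (f (B *v v)))"
    unfolding V(3) congr_sum[OF V(1)] congr_outer mtrace_sum[OF V(1)] mtrace_outer sesq_self f_def ..
  also have "\<dots> = of_real (\<Sum>v\<in>V. f (B *v v))" by simp
  finally have eq: "mtrace (B ** \<rho> ** adj B) = of_real (\<Sum>v\<in>V. f (B *v v))" .
  have "V \<noteq> {}" using assms(2) V(3) by (auto simp: mtrace_def)
  then obtain v where v: "v \<in> V" by blast
  have "v \<noteq> 0" using v V(2) vec.dependent_zero by blast
  then have "B *v v \<noteq> 0" using assms(3)
    by (metis matrix_vector_mul_assoc matrix_vector_mul_lid matrix_vector_mult_0_right)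
  moreover have "sesq (B *v v) (B *v v) = of_real (f (B *v v))" unfolding f_def by (rule sesq_self)
  ultimately have "f (B *v v) \<noteq> 0" using sesq_self_eq0[of "B *v v"] by auto
  moreover have fnn: "\<And>w. 0 \<le> f w" unfolding f_def by (simp add: sum_nonneg)
  ultimately have "0 < f (B *v v)" by (simp add: order_le_neq_trans)
  also have "f (B *v v) \<le> (\<Sum>v\<in>V. f (B *v v))"
    by (rule member_le_sum[OF v]) (auto simp: fnn V(1))
  finally show ?thesis using eq by blast
qed

definition G :: "complex^'n1^'n1 \<Rightarrow> (complex^('n2::finite \<times> 'n1::finite)^('n2 \<times> 'n1))^'m::finite
    \<Rightarrow> (complex^('n2 \<times> 'n1)^('n2 \<times> 'n1))^'m" where
  "G S T = (\<chi> k. (id_tensor S :: complex^('n2 \<times> 'n1)^('n2 \<times> 'n1)) ** T$k ** adj (id_tensor S :: complex^('n2 \<times> 'n1)^('n2 \<times> 'n1)))"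

lemma G_lin: "G S (c *\<^sub>R X + d *\<^sub>R Y) = c *\<^sub>R G S X + d *\<^sub>R G S Y"
  by (simp add: G_def vec_eq_iff matrix_add_ldistrib mm_add_r mm_scale_l mm_scale_r)

lemma G_scale: "G S (c *\<^sub>R X) = c *\<^sub>R G S X"
  by (simp add: G_def vec_eq_iff mm_scale_l mm_scale_r)

lemma G_inv:
  fixes S S' :: "complex^'n1::finite^'n1" and T :: "(complex^('n2::finite \<times> 'n1)^('n2 \<times> 'n1))^'m::finite"
  assumes "S' ** S = mat 1"
  shows "G S' (G S T) = T"
proof -
  define B :: "complex^('n2 \<times> 'n1)^('n2 \<times> 'n1)" where "B = id_tensor S"
  define B' :: "complex^('n2 \<times> 'n1)^('n2 \<times> 'n1)" where "B' = id_tensor S'"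
  have h1: "B' ** B = mat 1"
    using assms by (simp add: B_def B'_def id_tensor_mult id_tensor_one)
  have h2: "adj B ** adj B' = mat 1"
    using h1 by (metis adj_mult adj_one)
  show ?thesis
  proof (rule vec_eq_iff[THEN iffD2], rule allI)
    fix k
    have "G S' (G S T) $ k = B' ** (B ** T$k ** adj B) ** adj B'"
      by (simp add: G_def B_def B'_def)
    also have "\<dots> = (B' ** B) ** T$k ** (adj B ** adj B')"
      by (simp only: matrix_mul_assoc)
    also have "\<dots> = T$k" by (simp only: h1 h2 matrix_mul_lid matrix_mul_rid)
    finally show "G S' (G S T) $ k = T $ k" .
  qed
qed

lemma G_pos: "(\<forall>i. positive_op (T$i)) \<Longrightarrow> positive_op ((G S T)$i)"
  by (simp add: G_def pos_congr)

lemma G_sum: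
  assumes "(\<Sum>i\<in>UNIV. T$i) = (id_tensor \<sigma> :: complex^('n2::finite \<times> 'n1::finite)^('n2 \<times> 'n1))"
  shows "(\<Sum>i\<in>UNIV. (G S T :: (complex^('n2 \<times> 'n1)^('n2 \<times> 'n1))^'m::finite)$i) = id_tensor (S ** \<sigma> ** adj S)"
proof -
  have "(\<Sum>i\<in>UNIV. (G S T :: (complex^('n2 \<times> 'n1)^('n2 \<times> 'n1))^'m)$i) =
     (id_tensor S :: complex^('n2 \<times> 'n1)^('n2 \<times> 'n1)) ** (\<Sum>i\<in>UNIV. T$i) ** adj (id_tensor S :: complex^('n2 \<times> 'n1)^('n2 \<times> 'n1))"
    by (simp add: G_def congr_sum)
  also have "\<dots> = id_tensor (S ** \<sigma> ** adj S)"
    unfolding assms adj_id_tensor id_tensor_mult ..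
  finally show ?thesis .
qed

lemma sum_lin: "(\<Sum>i\<in>UNIV. (c *\<^sub>R X + d *\<^sub>R Y)$i) = c *\<^sub>R (\<Sum>i\<in>UNIV. X$i) + d *\<^sub>R (\<Sum>i\<in>UNIV. Y$i)"
  for X Y :: "(complex^'a^'b)^'m::finite"
  by (simp add: sum.distrib scaleR_sum_right)

lemma sum_scale: "(\<Sum>i\<in>UNIV. (c *\<^sub>R X)$i) = c *\<^sub>R (\<Sum>i\<in>UNIV. X$i)"
  for X :: "(complex^'a^'b)^'m::finite"
  by (simp add: scaleR_sum_right)

lemma extreme_comb:
  assumes "x extreme_point_of S" "a \<in> S" "b \<in> S" "0 < t" "t < 1" "x = (1 - t) *\<^sub>R a + t *\<^sub>R b"
  shows "a = b"
proof (rule ccontr)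
  assume "a \<noteq> b"
  then have "x \<in> open_segment a b" using assms(4-6) in_segment(2) by blast
  then show False using assms(1-3) extreme_point_of_def by blast
qed

lemma testersI: "(\<forall>i. positive_op (T$i)) \<Longrightarrow> density_op \<rho> \<Longrightarrow> (\<Sum>i\<in>UNIV. T$i) = id_tensor \<rho> \<Longrightarrow> T \<in> testers"
  unfolding testers_def by blast

lemma rescale:
  fixes U :: "(complex^('n2::finite \<times> 'n1::finite)^('n2 \<times> 'n1))^'m::finite"
  assumes U: "U \<in> testers" and S: "S ** S' = mat 1"
  obtains a \<rho>U where "0 < a" "density_op \<rho>U" "(\<Sum>i\<in>UNIV. U$i) = id_tensor \<rho>U"
    "mtrace (S' ** \<rho>U ** adj S') = of_real a"
    "(1/a) *\<^sub>R G S' U \<in> testers"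
proof -
  obtain \<rho>U where r: "density_op \<rho>U" "(\<Sum>i\<in>UNIV. U$i) = id_tensor \<rho>U" and P: "\<forall>i. positive_op (U$i)"
    using U unfolding testers_def by blast
  obtain a where a: "0 < a" "mtrace (S' ** \<rho>U ** adj S') = of_real a"
    using trace_pos[of \<rho>U S S'] r(1) S unfolding density_op_def by blast
  have "(1/a) *\<^sub>R G S' U \<in> testers"
  proof (rule testersI)
    show "\<forall>i. positive_op (((1/a) *\<^sub>R G S' U)$i)"
    proof
      fix i
      have "positive_op ((G S' U)$i)" by (rule G_pos[OF P])
      then show "positive_op (((1/a) *\<^sub>R G S' U)$i)"
        unfolding vector_scaleR_component using a(1) by (intro pos_scaleR) simp_all
    qed
    show "density_op ((1/a) *\<^sub>R (S' ** \<rho>U ** adj S'))"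
      unfolding density_op_def
    proof
      show "positive_op ((1/a) *\<^sub>R (S' ** \<rho>U ** adj S'))"
        using a(1) r(1) unfolding density_op_def by (intro pos_scaleR pos_congr) simp_all
      show "mtrace ((1/a) *\<^sub>R (S' ** \<rho>U ** adj S')) = 1"
        unfolding mtrace_scale a(2) using a(1) by (simp flip: of_real_mult)
    qed
    show "(\<Sum>i\<in>UNIV. ((1/a) *\<^sub>R G S' U)$i) = id_tensor ((1/a) *\<^sub>R (S' ** \<rho>U ** adj S'))"
      unfolding sum_scale G_sum[OF r(2)] id_tensor_scale ..
  qed
  then show ?thesis using that a r by blast
qed

lemma transfer:
  fixes T :: "(complex^('n2::finite \<times> 'n1::finite)^('n2 \<times> 'n1))^'m::finite"
  assumes ext: "extremal_tester T" and sumT: "(\<Sum>i\<in>UNIV. T$i) = id_tensor \<sigma>"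
    and S1: "S' ** S = mat 1" and S2: "S ** S' = mat 1" and dens: "density_op (S ** \<sigma> ** adj S)"
  shows "extremal_tester (G S T)"
proof -
  have ext': "T extreme_point_of testers" using ext extremal_tester_def by blast
  then have Tt: "T \<in> testers" by (simp add: extreme_point_of_def)
  then obtain \<sigma>0 where "density_op \<sigma>0" "(\<Sum>i\<in>UNIV. T$i) = id_tensor \<sigma>0" and TP: "\<forall>i. positive_op (T$i)"
    unfolding testers_def by blast
  then have dsig: "density_op \<sigma>" using sumT id_tensor_inj by metis
  have GTt: "G S T \<in> testers"
    using testersI[OF _ dens G_sum[OF sumT]] G_pos[OF TP] by blast
  have sumGT: "(\<Sum>i\<in>UNIV. (G S T)$i) = id_tensor (S ** \<sigma> ** adj S)" using G_sum[OF sumT] .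
  show ?thesis unfolding extremal_tester_def extreme_point_of_def
  proof (intro conjI GTt ballI)
    fix U V :: "(complex^('n2 \<times> 'n1)^('n2 \<times> 'n1))^'m"
    assume U: "U \<in> testers" and V: "V \<in> testers"
    show "G S T \<notin> open_segment U V"
    proof
      assume "G S T \<in> open_segment U V"
      then obtain u where UV: "U \<noteq> V" "0 < u" "u < 1" and GT: "G S T = (1 - u) *\<^sub>R U + u *\<^sub>R V"
        using in_segment(2) by blast
      obtain a \<rho>U where a: "0 < a" "density_op \<rho>U" "(\<Sum>i\<in>UNIV. U$i) = id_tensor \<rho>U"
          "mtrace (S' ** \<rho>U ** adj S') = of_real a" "(1/a) *\<^sub>R G S' U \<in> testers"
        using rescale[OF U S2] by blast
      obtain b \<rho>V where b: "0 < b" "density_op \<rho>V" "(\<Sum>i\<in>UNIV. V$i) = id_tensor \<rho>V"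
          "mtrace (S' ** \<rho>V ** adj S') = of_real b" "(1/b) *\<^sub>R G S' V \<in> testers"
        using rescale[OF V S2] by blast
      have T_eq: "T = (1 - u) *\<^sub>R G S' U + u *\<^sub>R G S' V"
      proof -
        have "T = G S' (G S T)" by (rule G_inv[OF S1, symmetric])
        also have "\<dots> = G S' ((1 - u) *\<^sub>R U + u *\<^sub>R V)" by (simp only: GT)
        also have "\<dots> = (1 - u) *\<^sub>R G S' U + u *\<^sub>R G S' V" by (rule G_lin)
        finally show ?thesis .
      qed
      have "id_tensor \<sigma> = (id_tensor ((1 - u) *\<^sub>R (S' ** \<rho>U ** adj S') + u *\<^sub>R (S' ** \<rho>V ** adj S'))
              :: complex^('n2 \<times> 'n1)^('n2 \<times> 'n1))"
        unfolding id_tensor_lin sumT[symmetric]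
        by (subst T_eq) (simp only: sum_lin G_sum[OF a(3)] G_sum[OF b(3)])
      then have "\<sigma> = (1 - u) *\<^sub>R (S' ** \<rho>U ** adj S') + u *\<^sub>R (S' ** \<rho>V ** adj S')"
        using id_tensor_inj by blast
      then have "mtrace \<sigma> = of_real ((1 - u) * a + u * b)"
        by (simp only: mtrace_add mtrace_scale a(4) b(4) of_real_add of_real_mult)
      then have "of_real ((1 - u) * a + u * b) = (1::complex)" using dsig unfolding density_op_def
        by simp
      then have tr: "(1 - u) * a + u * b = 1" by (simp only: of_real_eq_1_iff)
      define t where "t = u * b"
      have t0: "0 < t" unfolding t_def using UV(2) b(1) by (rule mult_pos_pos)
      have omt: "1 - t = (1 - u) * a" using tr unfolding t_def by linarith
      have "0 < (1 - u) * a" using UV(3) a(1) by simp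
      then have t1: "0 < t" "t < 1" using t0 omt by linarith+
      have c1: "(1 - t) * (1/a) = 1 - u" using omt a(1) by simp
      have c2: "t * (1/b) = u" using b(1) unfolding t_def by simp
      have T2: "T = (1 - t) *\<^sub>R ((1/a) *\<^sub>R G S' U) + t *\<^sub>R ((1/b) *\<^sub>R G S' V)"
        by (simp only: scaleR_scaleR c1 c2 T_eq)
      have XY: "(1/a) *\<^sub>R G S' U = (1/b) *\<^sub>R G S' V"
        by (rule extreme_comb[OF ext' a(5) b(5) t1 T2])
      have TX: "T = (1/a) *\<^sub>R G S' U"
      proof -
        have "T = (1 - t) *\<^sub>R ((1/a) *\<^sub>R G S' U) + t *\<^sub>R ((1/a) *\<^sub>R G S' U)"
          using T2 unfolding XY .
        also have "\<dots> = ((1 - t) + t) *\<^sub>R ((1/a) *\<^sub>R G S' U)" by (rule scaleR_add_left[symmetric])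
        finally show ?thesis by simp
      qed
      have TY: "T = (1/b) *\<^sub>R G S' V" using TX XY by simp
      have Ueq: "U = a *\<^sub>R G S T"
      proof -
        have "a *\<^sub>R T = G S' U" unfolding TX using a(1) by simp
        then have "G S (a *\<^sub>R T) = U" using G_inv[OF S2, of U] by simp
        then show ?thesis by (simp only: G_scale)
      qed
      have Veq: "V = b *\<^sub>R G S T"
      proof -
        have "b *\<^sub>R T = G S' V" unfolding TY using b(1) by simp
        then have "G S (b *\<^sub>R T) = V" using G_inv[OF S2, of V] by simp
        then show ?thesis by (simp only: G_scale)
      qed
      have "id_tensor \<rho>U = (id_tensor (a *\<^sub>R (S ** \<sigma> ** adj S)) :: complex^('n2 \<times> 'n1)^('n2 \<times> 'n1))"
        using a(3) unfolding Ueq sum_scale sumGT id_tensor_scale by simp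
      then have "\<rho>U = a *\<^sub>R (S ** \<sigma> ** adj S)" using id_tensor_inj by blast
      then have "a = 1" using a(2) dens unfolding density_op_def by (simp add: mtrace_scale)
      have "id_tensor \<rho>V = (id_tensor (b *\<^sub>R (S ** \<sigma> ** adj S)) :: complex^('n2 \<times> 'n1)^('n2 \<times> 'n1))"
        using b(3) unfolding Veq sum_scale sumGT id_tensor_scale by simp
      then have "\<rho>V = b *\<^sub>R (S ** \<sigma> ** adj S)" using id_tensor_inj by blast
      then have "b = 1" using b(2) dens unfolding density_op_def by (simp add: mtrace_scale)
      show False using UV(1) Ueq Veq \<open>a = 1\<close> \<open>b = 1\<close> by simp
    qed
  qed
qed


theorem mainTheorem7:
  fixes r :: nat
  assumes "1 \<le> r" and "r \<le> CARD('n1::finite)"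
  shows "(\<forall>\<rho> :: complex^'n1^'n1. density_op \<rho> \<and> rank \<rho> = r \<longrightarrow>
            (\<exists>T :: (complex^('n2::finite \<times> 'n1)^('n2 \<times> 'n1))^('m::finite).
               extremal_tester T \<and> (\<Sum>i\<in>UNIV. T$i) = id_tensor \<rho>))
       \<or> (\<forall>\<rho> :: complex^'n1^'n1. density_op \<rho> \<and> rank \<rho> = r \<longrightarrow>
            \<not> (\<exists>T :: (complex^('n2 \<times> 'n1)^('n2 \<times> 'n1))^'m.
               extremal_tester T \<and> (\<Sum>i\<in>UNIV. T$i) = id_tensor \<rho>))"
proof (cases "\<exists>\<rho>0 :: complex^'n1^'n1. density_op \<rho>0 \<and> rank \<rho>0 = r \<and>
     \<not> (\<exists>T :: (complex^('n2 \<times> 'n1)^('n2 \<times> 'n1))^'m. extremal_tester T \<and> (\<Sum>i\<in>UNIV. T$i) = id_tensor \<rho>0)")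
  case False
  show ?thesis
  proof (intro disjI1 allI impI)
    fix \<rho> :: "complex^'n1^'n1"
    assume "density_op \<rho> \<and> rank \<rho> = r"
    with False show "\<exists>T :: (complex^('n2 \<times> 'n1)^('n2 \<times> 'n1))^'m. extremal_tester T \<and> (\<Sum>i\<in>UNIV. T$i) = id_tensor \<rho>"
      by blast
  qed
next
  case True
  then obtain \<rho>0 :: "complex^'n1^'n1" where r0: "density_op \<rho>0" "rank \<rho>0 = r" and
    no: "\<not> (\<exists>T :: (complex^('n2 \<times> 'n1)^('n2 \<times> 'n1))^'m. extremal_tester T \<and> (\<Sum>i\<in>UNIV. T$i) = id_tensor \<rho>0)"
    by blast
  have key: "\<not> (\<exists>T :: (complex^('n2 \<times> 'n1)^('n2 \<times> 'n1))^'m.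
               extremal_tester T \<and> (\<Sum>i\<in>UNIV. T$i) = id_tensor \<sigma>)"
    if s: "density_op \<sigma>" "rank \<sigma> = r" for \<sigma> :: "complex^'n1^'n1"
  proof
    assume "\<exists>T :: (complex^('n2 \<times> 'n1)^('n2 \<times> 'n1))^'m.
               extremal_tester T \<and> (\<Sum>i\<in>UNIV. T$i) = id_tensor \<sigma>"
    then obtain T :: "(complex^('n2 \<times> 'n1)^('n2 \<times> 'n1))^'m" where
      T: "extremal_tester T" "(\<Sum>i\<in>UNIV. T$i) = id_tensor \<sigma>" by blast
    obtain S S' where S: "S' ** S = mat 1" "S ** S' = mat 1" "S ** \<sigma> ** adj S = \<rho>0"
      using congruence[of \<rho>0 \<sigma>] r0 s unfolding density_op_def by auto
    have "extremal_tester (G S T)" using transfer[OF T S(1,2)] S(3) r0(1) by simp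
    moreover have "(\<Sum>i\<in>UNIV. (G S T)$i) = id_tensor \<rho>0" using G_sum[OF T(2)] S(3) by simp
    ultimately show False using no by blast
  qed
  show ?thesis
  proof (intro disjI2 allI impI)
    fix \<sigma> :: "complex^'n1^'n1"
    assume "density_op \<sigma> \<and> rank \<sigma> = r"
    then show "\<not> (\<exists>T :: (complex^('n2 \<times> 'n1)^('n2 \<times> 'n1))^'m. extremal_tester T \<and> (\<Sum>i\<in>UNIV. T$i) = id_tensor \<sigma>)"
      using key by blast
  qed
qed

end
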